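(* Let $p$ be a prime, $m\ge1$, $s\ge0$ integers, $R^4=\mathbb{F}_{p^m}[u]/\langle u^4\rangle$, $f(x)\in\mathbb{F}_{p^m}[x]$ irreducible, $\omega(x)=f(x)^{p^s}$, $R^{4,\omega}=R^4[x]/\langle\omega(x)\rangle$, $R^{1,\omega}=\mathbb{F}_{p^m}[x]/\langle\omega(x)\rangle$. Let $a,t_1,t_2$ be integers with $0\le t_2<t_1<a\le p^s-1$ and let $h_1(x),h_2(x)\in R^{1,\omega}$ each be either $0$ or a unit of $R^{1,\omega}$. Let $L$ be the smallest non-negative integer such that $u^3f(x)^L\in\langle uf(x)^a+u^2f(x)^{t_1}h_1(x)+u^3f(x)^{t_2}h_2(x)\rangle$ (ideal of $R^{4,\omega}$). Then $$L=\begin{cases} a, & h_1=h_2=0,\\ \min\{a,\ p^s-a+t_2\}, & h_1=0,\ h_2\ne0,\\ \min\{a,\ p^s-2(a-t_1)\}, & h_1\ne0,\ h_2=0,\ a\le p^s-a+t_1,\\ t_1, & h_1\ne0,\ h_2=0,\ a\ge p^s-a+t_1,\\ \min\{a,\ p^s-a+t_1,\ \beta_1\}, & h_1\ne0,\ h_2\ne0,\ a\le p^s-a+t_1,\\ \min\{a,\ p^s+t_2-t_1,\ \beta_2\}, & h_1\ne0,\ h_2\ne0,\ a\ge p^s-a+t_1, \end{cases}$$ where $\beta_1=\max\{k: f(x)^k \text{ divides } f(x)^{p^s-a+t_2}h_2(x)-f(x)^{p^s-2a+2t_1}h_1(x)^2\}$ and $\beta_2=\max\{k: f(x)^k \text{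 divides } f(x)^{t_1}h_1(x)-f(x)^{a+t_2-t_1}h_2(x)h_1(x)^{-1}\}$, divisibility being taken in $R^{1,\omega}$.
   Context: $R^{1,\omega}$ is identified with the subring of $R^{4,\omega}$ consisting of classes of polynomials over $\mathbb{F}_{p^m}$ (no $u$). *)

theory Defs
  imports "HOL-Computational_Algebra.Computational_Algebra" "HOL-Library.Extended_Nat"
begin

text \<open>Model of R^{4,omega} = F[u]/(u^4) [x]/(omega(x)) = (F[x]/(omega))[u]/(u^4):
  an element is represented by its four u-coefficients (indices 0..3), each a polynomial
  over F taken modulo omega; entries at indices >= 4 are ignored.\<close>

definition r4w_mult :: "'a::field poly \<Rightarrow> (nat \<Rightarrow> 'a poly) \<Rightarrow> (nat \<Rightarrow> 'a poly) \<Rightarrow> (nat \<Rightarrow> 'a poly)" where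
  "r4w_mult \<omega> A B = (\<lambda>k. if k < 4 then (\<Sum>i\<le>k. A i * B (k - i)) mod \<omega> else 0)"

definition r4w_eq :: "'a::field poly \<Rightarrow> (nat \<Rightarrow> 'a poly) \<Rightarrow> (nat \<Rightarrow> 'a poly) \<Rightarrow> bool" where
  "r4w_eq \<omega> A B = (\<forall>k<4. A k mod \<omega> = B k mod \<omega>)"

definition r4w_in_ideal :: "'a::field poly \<Rightarrow> (nat \<Rightarrow> 'a poly) \<Rightarrow> (nat \<Rightarrow> 'a poly) \<Rightarrow> bool" where
  "r4w_in_ideal \<omega> g y = (\<exists>r. r4w_eq \<omega> (r4w_mult \<omega> r g) y)"

definition r4w_elem :: "'a::field poly \<Rightarrow> 'a poly \<Rightarrow> 'a poly \<Rightarrow> 'a poly \<Rightarrow> (nat \<Rightarrow> 'a poly)" where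
  "r4w_elem c0 c1 c2 c3 = (\<lambda>k. if k = 0 then c0 else if k = 1 then c1 else if k = 2 then c2
                               else if k = 3 then c3 else 0)"

definition r1w_unit :: "'a::field poly \<Rightarrow> 'a poly \<Rightarrow> bool" where
  "r1w_unit \<omega> h = (\<exists>v. (h * v) mod \<omega> = 1 mod \<omega>)"

definition r1w_inv :: "'a::field poly \<Rightarrow> 'a poly \<Rightarrow> 'a poly" where
  "r1w_inv \<omega> h = (SOME v. (h * v) mod \<omega> = 1 mod \<omega>)"

definition r1w_dvd :: "'a::field poly \<Rightarrow> 'a poly \<Rightarrow> 'a poly \<Rightarrow> bool" where
  "r1w_dvd \<omega> d y = (\<exists>q. (d * q) mod \<omega> = y mod \<omega>)"

text \<open>max{k. f^k divides y in R^{1,omega}}, taken in enat (infinity if y = 0 in R^{1,omega}).\<close>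
definition r1w_fval :: "'a::field poly \<Rightarrow> 'a poly \<Rightarrow> 'a poly \<Rightarrow> enat" where
  "r1w_fval \<omega> f y = Sup {enat k | k. r1w_dvd \<omega> (f ^ k) y}"

end

theory Submission
  imports Defs
begin

lemma pw_dvd_pw:
  fixes f :: "'a::field poly"
  assumes "prime_elem f"
  shows "f ^ m dvd f ^ n \<longleftrightarrow> m \<le> n"
proof
  assume h: "f ^ m dvd f ^ n"
  show "m \<le> n"
  proof (rule ccontr)
    assume "\<not> m \<le> n"
    then have "f ^ m = f ^ n * f ^ (m - n)" by (simp add: power_add[symmetric])
    with h have "f ^ n * f ^ (m - n) dvd f ^ n * 1" by simp
    then have "f ^ (m - n) dvd 1" using assms by (simp add: prime_elem_def)
    then have "is_unit f" using \<open>\<not> m \<le> n\<close> by (simp add: is_unit_power_iff)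
    then show False using assms by (simp add: prime_elem_def)
  qed
qed (simp add: le_imp_power_dvd)

lemma pw_dvd_cop:
  fixes f :: "'a::field poly"
  assumes "prime_elem f" "\<not> f dvd u"
  shows "f ^ k dvd u * x \<longleftrightarrow> f ^ k dvd x"
proof
  show "f ^ k dvd u * x \<Longrightarrow> f ^ k dvd x"
  proof (induction k)
    case 0 then show ?case by simp
  next
    case (Suc k)
    then have "f ^ k dvd x" by (metis dvd_mult_left power_Suc2)
    then obtain y where y: "x = f ^ k * y" by blast
    have "f ^ k * f dvd f ^ k * (u * y)" using Suc.prems y by (simp add: power_Suc2 ac_simps)
    then have "f dvd u * y" using assms(1) by (simp add: prime_elem_def)
    then have "f dvd y" using assms prime_elem_dvd_mult_iff by blast
    then show ?case using y by (simp add: power_Suc2)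
  qed
qed simp

lemma pw_dvd_shift:
  fixes f :: "'a::field poly"
  assumes "f \<noteq> 0" "j \<le> k"
  shows "f ^ k dvd f ^ j * x \<longleftrightarrow> f ^ (k - j) dvd x"
proof -
  have "f ^ k = f ^ j * f ^ (k - j)" using assms by (simp add: power_add[symmetric])
  then show ?thesis using assms by simp
qed

lemma bezout_poly:
  fixes a w :: "'a::field poly"
  assumes "a \<noteq> 0"
  obtains x y d where "x * a + y * w = d" "d dvd a" "d dvd w"
proof -
  define S where "S = {x * a + y * w | x y. x * a + y * w \<noteq> 0}"
  have "a \<in> S" unfolding S_def by (rule CollectI, rule exI[of _ 1], rule exI[of _ 0]) (simp add: assms)
  define n where "n = (LEAST n. \<exists>d\<in>S. euclidean_size d = n)"
  have "\<exists>d\<in>S. euclidean_size d = n" unfolding n_def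
    by (rule LeastI_ex) (use \<open>a \<in> S\<close> in blast)
  then obtain d where dS: "d \<in> S" and dn: "euclidean_size d = n" by blast
  have mn: "\<And>e. e \<in> S \<Longrightarrow> n \<le> euclidean_size e" unfolding n_def
    by (rule Least_le) blast
  from dS obtain x y where xy: "d = x * a + y * w" "d \<noteq> 0" unfolding S_def by blast
  have dv: "d dvd z" if z: "z = x' * a + y' * w" for z x' y'
  proof (rule ccontr)
    assume nd: "\<not> d dvd z"
    have "z mod d = z - (z div d) * d" by (simp add: minus_div_mult_eq_mod)
    also have "\<dots> = (x' - z div d * x) * a + (y' - z div d * y) * w"
      using z xy by (simp add: algebra_simps)
    finally have eq: "z mod d = (x' - z div d * x) * a + (y' - z div d * y) * w" .
    have "z mod d \<noteq> 0" using nd by (simp add: mod_eq_0_iff_dvd)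
    then have "z mod d \<in> S" unfolding S_def
      by (rule_tac CollectI, rule_tac exI[of _ "x' - z div d * x"], rule_tac exI[of _ "y' - z div d * y"]) (simp add: eq)
    then have "n \<le> euclidean_size (z mod d)" by (rule mn)
    moreover have "euclidean_size (z mod d) < euclidean_size d" using xy by (simp add: mod_size_less)
    ultimately show False using dn by simp
  qed
  have "d dvd a" by (rule dv[of _ 1 0]) simp
  moreover have "d dvd w" by (rule dv[of _ 0 1]) simp
  ultimately show ?thesis using that xy by blast
qed

lemma inv_mod:
  fixes f :: "'a::field poly"
  assumes "prime_elem f" "\<not> f dvd w"
  shows "\<exists>v. f ^ N dvd w * v - 1"
proof -
  have f0: "f \<noteq> 0" using assms prime_elem_not_zeroI by blast
  obtain x y d where b: "x * f ^ N + y * w = d" "d dvd f ^ N" "d dvd w"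
    using bezout_poly[of "f ^ N" w] f0 by auto
  have "\<not> f dvd d" using b(3) assms(2) dvd_trans by blast
  obtain e where e: "f ^ N = d * e" using b(2) by blast
  then have "f ^ N dvd d * e" by simp
  then have "f ^ N dvd e" using pw_dvd_cop[OF assms(1) \<open>\<not> f dvd d\<close>] by simp
  then obtain c where c: "e = f ^ N * c" by blast
  have "f ^ N * 1 = f ^ N * (d * c)" using e c by (simp add: ac_simps)
  then have dc: "d * c = 1" using f0 by (metis mult_left_cancel power_not_zero)
  have "w * (y * c) - 1 = f ^ N * (- (x * c))"
    using b(1) dc by (simp add: algebra_simps) (metis add_diff_cancel_right' distrib_right mult.commute)
  then show ?thesis by (metis dvd_triv_left)
qed

lemma decomp:
  fixes f :: "'a::field poly"
  assumes "prime_elem f"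
  shows "\<not> f ^ Suc j dvd X \<Longrightarrow> \<exists>k w. k \<le> j \<and> X = f ^ k * w \<and> \<not> f dvd w"
proof (induction j arbitrary: X)
  case 0
  then show ?case by (intro exI[of _ 0] exI[of _ X]) simp
next
  case (Suc j)
  show ?case
  proof (cases "f dvd X")
    case False
    then show ?thesis by (intro exI[of _ 0] exI[of _ X]) simp
  next
    case True
    then obtain X' where X': "X = f * X'" by blast
    have "\<not> f ^ Suc j dvd X'"
    proof
      assume "f ^ Suc j dvd X'"
      then have "f * f ^ Suc j dvd f * X'" by (rule mult_dvd_mono[OF dvd_refl])
      then show False using Suc.prems X' by simp
    qed
    from Suc.IH[OF this] obtain k w where "k \<le> j" "X' = f ^ k * w" "\<not> f dvd w" by blast
    then show ?thesis using X' by (intro exI[of _ "Suc k"] exI[of _ w]) auto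
  qed
qed

lemma solve:
  fixes f :: "'a::field poly"
  assumes "prime_elem f" "\<not> f ^ Suc j dvd X"
  shows "\<exists>c. f ^ N dvd c * X - f ^ j"
proof -
  obtain k w where w: "k \<le> j" "X = f ^ k * w" "\<not> f dvd w" using decomp[OF assms] by blast
  obtain v where v: "f ^ N dvd w * v - 1" using inv_mod assms w by blast
  have "f ^ (j - k) * v * X - f ^ j = f ^ j * (w * v - 1)"
    using w by (simp add: algebra_simps power_add[symmetric])
  then have "f ^ N dvd f ^ (j - k) * v * X - f ^ j" using v by (metis dvd_mult)
  then show ?thesis by blast
qed

lemma dvd_contra:
  fixes f :: "'a::field poly"
  assumes "prime_elem f" "j < N" "f ^ N dvd T - f ^ j" "f ^ Suc j dvd T"
  shows False
proof -
  have "Suc j \<le> N" using assms by simp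
  then have "f ^ Suc j dvd f ^ N" using pw_dvd_pw[OF assms(1)] by blast
  then have "f ^ Suc j dvd T - f ^ j" using assms dvd_trans by blast
  then have "f ^ Suc j dvd T - (T - f ^ j)" using assms(4) by (rule dvd_diff[rotated])
  then have "f ^ Suc j dvd f ^ j" by simp
  then show False using pw_dvd_pw[OF assms(1), of "Suc j" j] by linarith
qed

definition Qp :: "'a::field poly \<Rightarrow> nat \<Rightarrow> nat \<Rightarrow> nat \<Rightarrow> nat \<Rightarrow> 'a poly \<Rightarrow> 'a poly \<Rightarrow> nat \<Rightarrow> bool" where
  "Qp f N a t1 t2 h1 h2 j = (\<exists>r0 r1 r2. f ^ N dvd r0 * f ^ a \<and> f ^ N dvd r0 * (f ^ t1 * h1) + r1 * f ^ a
     \<and> f ^ N dvd r0 * (f ^ t2 * h2) + r1 * (f ^ t1 * h1) + r2 * f ^ a - f ^ j)"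

lemma all4: "(\<forall>k<(4::nat). P k) \<longleftrightarrow> P 0 \<and> P 1 \<and> P 2 \<and> P 3"
  by (auto simp: less_Suc_eq numeral_eq_Suc)

lemma sum4: "(\<Sum>i\<le>(3::nat). F i) = F 0 + F 1 + F 2 + F 3"
  and sum3: "(\<Sum>i\<le>(2::nat). F i) = F 0 + F 1 + F 2"
  and sum2: "(\<Sum>i\<le>(1::nat). F i) = F 0 + F 1"
  and sum1: "(\<Sum>i\<le>(0::nat). F i) = F 0"
  by (simp_all add: numeral_eq_Suc atMost_Suc add_ac)

lemma reduceA:
  fixes f h1 h2 :: "'a::field poly"
  shows "r4w_in_ideal (f ^ N) (r4w_elem 0 (f ^ a) (f ^ t1 * h1) (f ^ t2 * h2)) (r4w_elem 0 0 0 (f ^ j))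
     = Qp f N a t1 t2 h1 h2 j"
proof -
  have e: "(r4w_mult \<omega> r g k mod \<omega> = y mod \<omega>) = (\<omega> dvd (\<Sum>i\<le>k. r i * g (k - i)) - y)"
    if "k < 4" for \<omega> r g k and y :: "'a poly"
    using that by (simp add: r4w_mult_def mod_eq_dvd_iff)
  show ?thesis
    unfolding r4w_in_ideal_def r4w_eq_def all4 Qp_def
    apply (simp only: e)
    apply (simp add: sum4 sum3 sum2 sum1 r4w_elem_def)
    apply (rule iffI)
     apply (elim exE)
     apply blast
    apply (elim exE conjE)
    apply (rule_tac x="\<lambda>i. if i = 0 then r0 else if i = 1 then r1 else r2" in exI)
    apply (simp add: ac_simps)
    done
qed

lemma r1w_dvd_iff:
  fixes f X :: "'a::field poly"
  shows "r1w_dvd (f ^ N) (f ^ k) X \<longleftrightarrow> f ^ (min k N) dvd X"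
proof (cases "k \<le> N")
  case True
  have "r1w_dvd (f ^ N) (f ^ k) X \<longleftrightarrow> (\<exists>q. f ^ N dvd f ^ k * q - X)"
    by (simp add: r1w_dvd_def mod_eq_dvd_iff)
  also have "\<dots> \<longleftrightarrow> f ^ k dvd X"
  proof
    assume "\<exists>q. f ^ N dvd f ^ k * q - X"
    then obtain q where "f ^ N dvd f ^ k * q - X" by blast
    moreover have "f ^ k dvd f ^ N" using True by (simp add: le_imp_power_dvd)
    ultimately have "f ^ k dvd f ^ k * q - X" using dvd_trans by blast
    then have "f ^ k dvd f ^ k * q - (f ^ k * q - X)" by (rule dvd_diff[rotated]) simp
    then show "f ^ k dvd X" by simp
  next
    assume "f ^ k dvd X"
    then obtain q where "X = f ^ k * q" by blast
    then show "\<exists>q. f ^ N dvd f ^ k * q - X" by (intro exI[of _ q]) simp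
  qed
  finally show ?thesis using True by simp
next
  case False
  have "r1w_dvd (f ^ N) (f ^ k) X \<longleftrightarrow> (\<exists>q. f ^ N dvd f ^ k * q - X)"
    by (simp add: r1w_dvd_def mod_eq_dvd_iff)
  also have "\<dots> \<longleftrightarrow> f ^ N dvd X"
  proof
    assume "\<exists>q. f ^ N dvd f ^ k * q - X"
    then obtain q where q: "f ^ N dvd f ^ k * q - X" by blast
    have "f ^ N dvd f ^ k" using False by (simp add: le_imp_power_dvd)
    then have "f ^ N dvd f ^ k * q" by simp
    then have "f ^ N dvd f ^ k * q - (f ^ k * q - X)" using q by (rule dvd_diff)
    then show "f ^ N dvd X" by simp
  next
    assume "f ^ N dvd X"
    then show "\<exists>q. f ^ N dvd f ^ k * q - X" by (intro exI[of _ 0]) simp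
  qed
  finally show ?thesis using False by simp
qed

lemma fval_iff:
  fixes f X :: "'a::field poly"
  assumes "Suc j \<le> N"
  shows "enat (Suc j) \<le> r1w_fval (f ^ N) f X \<longleftrightarrow> f ^ Suc j dvd X"
proof
  assume h: "f ^ Suc j dvd X"
  have "r1w_dvd (f ^ N) (f ^ Suc j) X = (f ^ Suc j dvd X)"
    using r1w_dvd_iff[of f N "Suc j" X] assms by (simp only: min.absorb1)
  then have "r1w_dvd (f ^ N) (f ^ Suc j) X" using h by blast
  then show "enat (Suc j) \<le> r1w_fval (f ^ N) f X" unfolding r1w_fval_def
    by (intro Sup_upper) blast
next
  assume h: "enat (Suc j) \<le> r1w_fval (f ^ N) f X"
  show "f ^ Suc j dvd X"
  proof (rule ccontr)
    assume n: "\<not> f ^ Suc j dvd X"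
    have "r1w_fval (f ^ N) f X \<le> enat j" unfolding r1w_fval_def
    proof (rule Sup_least)
      fix x assume "x \<in> {enat k |k. r1w_dvd (f ^ N) (f ^ k) X}"
      then obtain k where k: "x = enat k" "f ^ (min k N) dvd X" using r1w_dvd_iff by blast
      have "k \<le> j"
      proof (rule ccontr)
        assume "\<not> k \<le> j"
        then have "Suc j \<le> min k N" using assms by simp
        then have "f ^ Suc j dvd f ^ (min k N)" by (rule le_imp_power_dvd)
        then show False using k n dvd_trans by blast
      qed
      then show "x \<le> enat j" using k by simp
    qed
    then show False using h by (simp add: Suc_ile_eq)
  qed
qed

lemma least_enat:
  assumes "\<And>j. j < N \<Longrightarrow> Q j \<longleftrightarrow> \<mu> \<le> enat j" "\<mu> \<le> enat a" "a < N"
  shows "enat (LEAST j. Q j) = \<mu>"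
proof -
  obtain M where M: "\<mu> = enat M" using assms(2) by (cases \<mu>) auto
  have "M \<le> a" using M assms(2) by simp
  have "Q M" using assms(1)[of M] M \<open>M \<le> a\<close> assms(3) by simp
  have "(LEAST j. Q j) = M"
  proof (rule Least_equality)
    show "Q M" by fact
    fix y assume "Q y"
    show "M \<le> y"
    proof (rule ccontr)
      assume "\<not> M \<le> y"
      then have "y < N" using \<open>M \<le> a\<close> assms(3) by simp
      then show False using assms(1)[of y] \<open>Q y\<close> M \<open>\<not> M \<le> y\<close> by simp
    qed
  qed
  then show ?thesis using M by simp
qed

lemma dvd_pw_cancel:
  fixes f :: "'a::field poly"
  assumes "f \<noteq> 0" "a \<le> N" "f ^ N dvd r * f ^ a"
  shows "\<exists>k. r = f ^ (N - a) * k"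
proof -
  have "f ^ N dvd f ^ a * r" using assms by (simp add: ac_simps)
  then have "f ^ (N - a) dvd r" using pw_dvd_shift[OF assms(1,2)] by blast
  then show ?thesis by blast
qed

lemma G0:
  fixes f h1 h2 :: "'a::field poly"
  assumes pf: "prime_elem f" and h1: "f ^ N dvd h1" and aN: "a < N" and jN: "j < N"
  shows "Qp f N a t1 t2 h1 h2 j \<longleftrightarrow> a \<le> j \<or> \<not> f ^ Suc j dvd f ^ (N - a + t2) * h2"
proof
  have f0: "f \<noteq> 0" using pf prime_elem_not_zeroI by blast
  assume "Qp f N a t1 t2 h1 h2 j"
  then obtain r0 r1 r2 where r: "f ^ N dvd r0 * f ^ a" "f ^ N dvd r0 * (f ^ t1 * h1) + r1 * f ^ a"
     "f ^ N dvd r0 * (f ^ t2 * h2) + r1 * (f ^ t1 * h1) + r2 * f ^ a - f ^ j"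
    unfolding Qp_def by blast
  obtain k0 where k0: "r0 = f ^ (N - a) * k0" using dvd_pw_cancel[OF f0 _ r(1)] aN by auto
  show "a \<le> j \<or> \<not> f ^ Suc j dvd f ^ (N - a + t2) * h2"
  proof (rule ccontr)
    assume "\<not> (a \<le> j \<or> \<not> f ^ Suc j dvd f ^ (N - a + t2) * h2)"
    then have ja: "j < a" and X: "f ^ Suc j dvd f ^ (N - a + t2) * h2" by auto
    have e1: "r0 * (f ^ t2 * h2) = k0 * (f ^ (N - a + t2) * h2)" using k0 by (simp add: power_add algebra_simps)
    have "f ^ Suc j dvd f ^ N" using jN by (intro le_imp_power_dvd) simp
    then have d2: "f ^ Suc j dvd r1 * (f ^ t1 * h1)" using h1 by (meson dvd_mult dvd_trans)
    have "f ^ Suc j dvd f ^ a" using ja by (intro le_imp_power_dvd) simp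
    then have d3: "f ^ Suc j dvd r2 * f ^ a" by simp
    have "f ^ Suc j dvd r0 * (f ^ t2 * h2) + r1 * (f ^ t1 * h1) + r2 * f ^ a"
      unfolding e1 by (rule dvd_add[OF dvd_add[OF dvd_mult[OF X] d2] d3])
    then show False using dvd_contra[OF pf jN r(3)] by blast
  qed
next
  assume h: "a \<le> j \<or> \<not> f ^ Suc j dvd f ^ (N - a + t2) * h2"
  show "Qp f N a t1 t2 h1 h2 j"
  proof (cases "a \<le> j")
    case True
    then have "f ^ (j - a) * f ^ a = f ^ j" by (simp add: power_add[symmetric])
    then show ?thesis unfolding Qp_def by (intro exI[of _ 0] exI[of _ "f ^ (j - a)"]) simp
  next
    case False
    with h obtain c where c: "f ^ N dvd c * (f ^ (N - a + t2) * h2) - f ^ j" using solve pf by blast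
    have e1: "f ^ (N - a) * c * f ^ a = f ^ N * c" using aN by (simp add: power_add[symmetric] algebra_simps)
    have e2: "f ^ (N - a) * c * (f ^ t2 * h2) = c * (f ^ (N - a + t2) * h2)" by (simp add: power_add algebra_simps)
    have g1: "f ^ N dvd f ^ (N - a) * c * f ^ a" unfolding e1 by simp
    have g2: "f ^ N dvd f ^ (N - a) * c * (f ^ t1 * h1) + 0 * f ^ a" using h1 by simp
    have g3: "f ^ N dvd f ^ (N - a) * c * (f ^ t2 * h2) + 0 * (f ^ t1 * h1) + 0 * f ^ a - f ^ j"
      unfolding e2 using c by simp
    show ?thesis unfolding Qp_def using g1 g2 g3 by blast
  qed
qed

lemma dvd_contra3:
  fixes f :: "'a::field poly"
  assumes "prime_elem f" "j < N" "f ^ N dvd T - f ^ j" "T = A + B + C"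
    "f ^ Suc j dvd A" "f ^ Suc j dvd B" "f ^ Suc j dvd C"
  shows False
proof -
  have "f ^ Suc j dvd T" using assms(4-7) by simp
  then show False using dvd_contra[OF assms(1-3)] by blast
qed

lemma G5:
  fixes f h1 h2 v1 :: "'a::field poly"
  assumes pf: "prime_elem f" and v1: "f ^ N dvd h1 * v1 - 1"
    and le: "2 * a \<le> N + t1" and aN: "a < N" and ta: "t1 < a" and jN: "j < N"
  shows "Qp f N a t1 t2 h1 h2 j \<longleftrightarrow> a \<le> j \<or> N - a + t1 \<le> j \<or>
           \<not> f ^ Suc j dvd (f ^ (N - a + t2) * h2 - f ^ (N - 2 * (a - t1)) * h1 ^ 2)"
proof -
  have f0: "f \<noteq> 0" using pf prime_elem_not_zeroI by blast
  obtain e where e: "a = t1 + e" using ta less_imp_add_positive by blast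
  have "t1 + e + e \<le> N" using le e by simp
  define d where "d = N - (t1 + e + e)"
  have d: "N = d + t1 + e + e" unfolding d_def using \<open>t1 + e + e \<le> N\<close> by simp
  have x1: "N - a = d + e" "N - a + t1 = d + e + t1" "N - 2 * (a - t1) = d + t1" "N - a + t2 = d + e + t2"
    using e d by simp_all
  define X where "X = f ^ (d + e + t2) * h2 - f ^ (d + t1) * h1 ^ 2"
  show ?thesis unfolding x1 X_def[symmetric]
  proof
    assume "Qp f N a t1 t2 h1 h2 j"
    then obtain r0 r1 r2 where r: "f ^ N dvd r0 * f ^ a" "f ^ N dvd r0 * (f ^ t1 * h1) + r1 * f ^ a"
       "f ^ N dvd r0 * (f ^ t2 * h2) + r1 * (f ^ t1 * h1) + r2 * f ^ a - f ^ j"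
      unfolding Qp_def by blast
    obtain k0 where k0: "r0 = f ^ (d + e) * k0" using dvd_pw_cancel[OF f0 _ r(1)] aN x1 by auto
    have "r0 * (f ^ t1 * h1) + r1 * f ^ a = f ^ a * (f ^ d * k0 * h1 + r1)"
      unfolding k0 e by (simp add: power_add algebra_simps)
    then have "f ^ N dvd f ^ a * (f ^ d * k0 * h1 + r1)" using r(2) by simp
    then have "f ^ (N - a) dvd f ^ d * k0 * h1 + r1" using pw_dvd_shift[OF f0, of a N] aN by simp
    then obtain k1 where k1: "f ^ d * k0 * h1 + r1 = f ^ (d + e) * k1" using x1 by (auto elim: dvdE)
    then have r1: "r1 = f ^ (d + e) * k1 - f ^ d * k0 * h1" by (simp add: algebra_simps)
    have T: "r0 * (f ^ t2 * h2) + r1 * (f ^ t1 * h1) + r2 * f ^ a = k0 * X + f ^ (d + e + t1) * (k1 * h1) + r2 * f ^ a"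
      unfolding k0 r1 X_def by (simp add: power_add algebra_simps power2_eq_square)
    show "a \<le> j \<or> d + e + t1 \<le> j \<or> \<not> f ^ Suc j dvd X"
    proof (rule ccontr)
      assume "\<not> (a \<le> j \<or> d + e + t1 \<le> j \<or> \<not> f ^ Suc j dvd X)"
      then have ja: "Suc j \<le> a" "Suc j \<le> d + e + t1" and X: "f ^ Suc j dvd X" by auto
      have "f ^ Suc j dvd f ^ (d + e + t1)" using ja by (intro le_imp_power_dvd)
      then have B: "f ^ Suc j dvd f ^ (d + e + t1) * (k1 * h1)" by simp
      have "f ^ Suc j dvd f ^ a" using ja by (intro le_imp_power_dvd)
      then have C: "f ^ Suc j dvd r2 * f ^ a" by simp
      show False by (rule dvd_contra3[OF pf jN r(3) T dvd_mult[OF X] B C])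
    qed
  next
    assume h: "a \<le> j \<or> d + e + t1 \<le> j \<or> \<not> f ^ Suc j dvd X"
    consider (A) "a \<le> j" | (B) "d + e + t1 \<le> j" | (C) "\<not> f ^ Suc j dvd X" using h by blast
    then show "Qp f N a t1 t2 h1 h2 j"
    proof cases
      case A
      then have "f ^ (j - a) * f ^ a = f ^ j" by (simp add: power_add[symmetric])
      then show ?thesis unfolding Qp_def by (intro exI[of _ 0] exI[of _ "f ^ (j - a)"]) simp
    next
      case B
      then obtain q where q: "j = d + e + t1 + q" using le_Suc_ex by blast
      have g1: "f ^ N dvd 0 * f ^ a" by simp
      have "f ^ (d + e + q) * v1 * f ^ a = f ^ N * (f ^ q * v1)"
        unfolding e d by (simp add: power_add algebra_simps mult_2)
      then have "f ^ N dvd f ^ (d + e + q) * v1 * f ^ a" by (metis dvd_triv_left)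
      then have g2: "f ^ N dvd 0 * (f ^ t1 * h1) + f ^ (d + e + q) * v1 * f ^ a" by simp
      have "0 * (f ^ t2 * h2) + f ^ (d + e + q) * v1 * (f ^ t1 * h1) + 0 * f ^ a - f ^ j = f ^ j * (h1 * v1 - 1)"
        unfolding q by (simp add: power_add algebra_simps)
      then have g3: "f ^ N dvd 0 * (f ^ t2 * h2) + f ^ (d + e + q) * v1 * (f ^ t1 * h1) + 0 * f ^ a - f ^ j"
        using v1 by (metis dvd_mult)
      show ?thesis unfolding Qp_def using g1 g2 g3 by blast
    next
      case C
      then obtain c where c: "f ^ N dvd c * X - f ^ j" using solve pf by blast
      have "f ^ (d + e) * c * f ^ a = f ^ N * c"
        unfolding e d by (simp add: power_add algebra_simps mult_2)
      then have g1: "f ^ N dvd f ^ (d + e) * c * f ^ a" by (metis dvd_triv_left)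
      have "f ^ (d + e) * c * (f ^ t1 * h1) + (- (f ^ d * c * h1)) * f ^ a = 0"
        unfolding e by (simp add: power_add algebra_simps)
      then have g2: "f ^ N dvd f ^ (d + e) * c * (f ^ t1 * h1) + (- (f ^ d * c * h1)) * f ^ a" by (metis dvd_0_right)
      have "f ^ (d + e) * c * (f ^ t2 * h2) + (- (f ^ d * c * h1)) * (f ^ t1 * h1) + 0 * f ^ a - f ^ j = c * X - f ^ j"
        unfolding X_def by (simp add: power_add algebra_simps power2_eq_square)
      then have g3: "f ^ N dvd f ^ (d + e) * c * (f ^ t2 * h2) + (- (f ^ d * c * h1)) * (f ^ t1 * h1) + 0 * f ^ a - f ^ j"
        using c by metis
      show ?thesis unfolding Qp_def using g1 g2 g3 by blast
    qed
  qed
qed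

lemma G6:
  fixes f h1 h2 v1 :: "'a::field poly"
  assumes pf: "prime_elem f" and nh1: "\<not> f dvd h1" and v1: "f ^ N dvd h1 * v1 - 1"
    and le: "N + t1 \<le> 2 * a" and aN: "a < N" and ta: "t1 < a" and jN: "j < N"
  shows "Qp f N a t1 t2 h1 h2 j \<longleftrightarrow> a \<le> j \<or> N - a + t1 \<le> j \<or>
           \<not> f ^ Suc j dvd (f ^ (a - t1 + t2) * h2 - f ^ t1 * h1 ^ 2)"
proof -
  have f0: "f \<noteq> 0" using pf prime_elem_not_zeroI by blast
  define g where "g = N - a"
  define d where "d = a - t1 - g"
  have a: "a = t1 + g + d" and N: "N = t1 + g + d + g" using le aN ta unfolding g_def d_def by simp_all
  have x1: "N - a = g" "N - a + t1 = g + t1" "a - t1 + t2 = g + d + t2" "a - t1 = g + d"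
    using a N by simp_all
  define Y where "Y = f ^ (g + d + t2) * h2 - f ^ t1 * h1 ^ 2"
  show ?thesis unfolding x1 Y_def[symmetric]
  proof
    assume "Qp f N a t1 t2 h1 h2 j"
    then obtain r0 r1 r2 where r: "f ^ N dvd r0 * f ^ a" "f ^ N dvd r0 * (f ^ t1 * h1) + r1 * f ^ a"
       "f ^ N dvd r0 * (f ^ t2 * h2) + r1 * (f ^ t1 * h1) + r2 * f ^ a - f ^ j"
      unfolding Qp_def by blast
    have "f ^ a dvd f ^ N" using aN by (intro le_imp_power_dvd) simp
    then have "f ^ a dvd r0 * (f ^ t1 * h1) + r1 * f ^ a" using r(2) dvd_trans by blast
    then have "f ^ a dvd r0 * (f ^ t1 * h1)" by (simp add: dvd_add_left_iff)
    then have "f ^ a dvd h1 * (f ^ t1 * r0)" by (simp add: ac_simps)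
    then have "f ^ a dvd f ^ t1 * r0" using pw_dvd_cop[OF pf nh1] by blast
    then have "f ^ (a - t1) dvd r0" using pw_dvd_shift[OF f0, of t1 a] ta by simp
    then obtain e0 where e0: "r0 = f ^ (g + d) * e0" using x1 by (auto elim: dvdE)
    have "r0 * (f ^ t1 * h1) + r1 * f ^ a = f ^ a * (e0 * h1 + r1)"
      unfolding e0 a by (simp add: power_add algebra_simps)
    then have "f ^ N dvd f ^ a * (e0 * h1 + r1)" using r(2) by simp
    then have "f ^ (N - a) dvd e0 * h1 + r1" using pw_dvd_shift[OF f0, of a N] aN by simp
    then obtain k1 where k1: "e0 * h1 + r1 = f ^ g * k1" using x1 by (auto elim: dvdE)
    then have r1: "r1 = f ^ g * k1 - e0 * h1" by (simp add: algebra_simps)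
    have T: "r0 * (f ^ t2 * h2) + r1 * (f ^ t1 * h1) + r2 * f ^ a = e0 * Y + f ^ (g + t1) * (k1 * h1) + r2 * f ^ a"
      unfolding e0 r1 Y_def by (simp add: power_add algebra_simps power2_eq_square)
    show "a \<le> j \<or> g + t1 \<le> j \<or> \<not> f ^ Suc j dvd Y"
    proof (rule ccontr)
      assume "\<not> (a \<le> j \<or> g + t1 \<le> j \<or> \<not> f ^ Suc j dvd Y)"
      then have ja: "Suc j \<le> a" "Suc j \<le> g + t1" and Y: "f ^ Suc j dvd Y" by auto
      have "f ^ Suc j dvd f ^ (g + t1)" using ja by (intro le_imp_power_dvd)
      then have B: "f ^ Suc j dvd f ^ (g + t1) * (k1 * h1)" by simp
      have "f ^ Suc j dvd f ^ a" using ja by (intro le_imp_power_dvd)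
      then have C: "f ^ Suc j dvd r2 * f ^ a" by simp
      show False by (rule dvd_contra3[OF pf jN r(3) T dvd_mult[OF Y] B C])
    qed
  next
    assume h: "a \<le> j \<or> g + t1 \<le> j \<or> \<not> f ^ Suc j dvd Y"
    consider (A) "a \<le> j" | (B) "g + t1 \<le> j" | (C) "\<not> f ^ Suc j dvd Y" using h by blast
    then show "Qp f N a t1 t2 h1 h2 j"
    proof cases
      case A
      then have "f ^ (j - a) * f ^ a = f ^ j" by (simp add: power_add[symmetric])
      then show ?thesis unfolding Qp_def by (intro exI[of _ 0] exI[of _ "f ^ (j - a)"]) simp
    next
      case B
      then obtain q where q: "j = g + t1 + q" using le_Suc_ex by blast
      have g1: "f ^ N dvd 0 * f ^ a" by simp
      have "f ^ (g + q) * v1 * f ^ a = f ^ N * (f ^ q * v1)"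
        unfolding a N by (simp add: power_add algebra_simps)
      then have "f ^ N dvd f ^ (g + q) * v1 * f ^ a" by (metis dvd_triv_left)
      then have g2: "f ^ N dvd 0 * (f ^ t1 * h1) + f ^ (g + q) * v1 * f ^ a" by simp
      have "0 * (f ^ t2 * h2) + f ^ (g + q) * v1 * (f ^ t1 * h1) + 0 * f ^ a - f ^ j = f ^ j * (h1 * v1 - 1)"
        unfolding q by (simp add: power_add algebra_simps)
      then have g3: "f ^ N dvd 0 * (f ^ t2 * h2) + f ^ (g + q) * v1 * (f ^ t1 * h1) + 0 * f ^ a - f ^ j"
        using v1 by (metis dvd_mult)
      show ?thesis unfolding Qp_def using g1 g2 g3 by blast
    next
      case C
      then obtain c where c: "f ^ N dvd c * Y - f ^ j" using solve pf by blast
      have "f ^ (g + d) * c * f ^ a = f ^ N * (f ^ d * c)"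
        unfolding a N by (simp add: power_add algebra_simps)
      then have g1: "f ^ N dvd f ^ (g + d) * c * f ^ a" by (metis dvd_triv_left)
      have "f ^ (g + d) * c * (f ^ t1 * h1) + (- (c * h1)) * f ^ a = 0"
        unfolding a by (simp add: power_add algebra_simps)
      then have g2: "f ^ N dvd f ^ (g + d) * c * (f ^ t1 * h1) + (- (c * h1)) * f ^ a" by (metis dvd_0_right)
      have "f ^ (g + d) * c * (f ^ t2 * h2) + (- (c * h1)) * (f ^ t1 * h1) + 0 * f ^ a - f ^ j = c * Y - f ^ j"
        unfolding Y_def by (simp add: power_add algebra_simps power2_eq_square)
      then have g3: "f ^ N dvd f ^ (g + d) * c * (f ^ t2 * h2) + (- (c * h1)) * (f ^ t1 * h1) + 0 * f ^ a - f ^ j"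
        using c by metis
      show ?thesis unfolding Qp_def using g1 g2 g3 by blast
    qed
  qed
qed

lemma dvd_diff_iff1:
  fixes k A B :: "'a::field poly"
  assumes "k dvd A" shows "k dvd A - B \<longleftrightarrow> k dvd B"
proof
  assume "k dvd A - B"
  then have "k dvd A - (A - B)" by (rule dvd_diff[OF assms])
  then show "k dvd B" by simp
qed (use assms in \<open>rule dvd_diff\<close>)

lemma unit_facts:
  fixes f h :: "'a::field poly"
  assumes pf: "prime_elem f" and N: "0 < N" and u: "r1w_unit (f ^ N) h"
  shows "\<exists>v. f ^ N dvd h * v - 1" "\<not> f dvd h"
proof -
  obtain v where v: "(h * v) mod f ^ N = 1 mod f ^ N" using u unfolding r1w_unit_def by blast
  then have v': "f ^ N dvd h * v - 1" by (simp add: mod_eq_dvd_iff)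
  then show "\<exists>v. f ^ N dvd h * v - 1" by blast
  show "\<not> f dvd h"
  proof
    assume "f dvd h"
    then have "f dvd h * v" by simp
    moreover have "f dvd h * v - 1" using v' N dvd_trans dvd_power by blast
    ultimately have "f dvd h * v - (h * v - 1)" by (rule dvd_diff)
    then have "f dvd 1" by simp
    then show False using pf by (simp add: prime_elem_def)
  qed
qed

lemma pw_unit_dvd:
  fixes f u :: "'a::field poly"
  assumes pf: "prime_elem f" and "\<not> f dvd u"
  shows "f ^ k dvd f ^ A * u \<longleftrightarrow> k \<le> A"
proof -
  have "f ^ k dvd f ^ A * u \<longleftrightarrow> f ^ k dvd u * f ^ A" by (simp add: ac_simps)
  also have "\<dots> \<longleftrightarrow> f ^ k dvd f ^ A" by (rule pw_dvd_cop[OF assms])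
  also have "\<dots> \<longleftrightarrow> k \<le> A" by (rule pw_dvd_pw[OF pf])
  finally show ?thesis .
qed

lemma val_two:
  fixes f u1 u2 :: "'a::field poly"
  assumes pf: "prime_elem f" and u1: "\<not> f dvd u1" and u2: "\<not> f dvd u2" and AB: "A \<noteq> B"
    and k: "f ^ k dvd f ^ A * u2 - f ^ B * u1"
  shows "k \<le> A \<and> k \<le> B"
proof (rule ccontr)
  assume nk: "\<not> (k \<le> A \<and> k \<le> B)"
  show False
  proof (cases "A < B")
    case True
    then have "Suc A \<le> k" using nk by auto
    then have "f ^ Suc A dvd f ^ k" by (rule le_imp_power_dvd)
    then have d: "f ^ Suc A dvd f ^ A * u2 - f ^ B * u1" using k dvd_trans by blast
    have "Suc A \<le> B" using True by simp
    then have "f ^ Suc A dvd f ^ B * u1" using pw_unit_dvd[OF pf u1] by blast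
    then have "f ^ Suc A dvd f ^ A * u2 - f ^ B * u1 \<longleftrightarrow> f ^ Suc A dvd f ^ A * u2"
      by (metis dvd_diff dvd_diff_iff1 diff_diff_cancel dvd_minus_iff minus_diff_eq)
    with d have "f ^ Suc A dvd f ^ A * u2" by blast
    then show False by (metis pw_unit_dvd[OF pf u2] Suc_n_not_le_n)
  next
    case False
    then have BA: "B < A" using AB by simp
    then have "Suc B \<le> k" using nk by auto
    then have "f ^ Suc B dvd f ^ k" by (rule le_imp_power_dvd)
    then have d: "f ^ Suc B dvd f ^ A * u2 - f ^ B * u1" using k dvd_trans by blast
    have "Suc B \<le> A" using BA by simp
    then have "f ^ Suc B dvd f ^ A * u2" using pw_unit_dvd[OF pf u2] by blast
    with d have "f ^ Suc B dvd f ^ B * u1" using dvd_diff_iff1 by blast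
    then show False by (metis pw_unit_dvd[OF pf u1] Suc_n_not_le_n)
  qed
qed

lemma main:
  fixes f h1 h2 :: "'a::field poly" and N a t1 t2 :: nat
  assumes pf: "prime_elem f" and t21: "t2 < t1" and t1a: "t1 < a" and aN: "a < N"
    and H1: "h1 mod (f ^ N) = 0 \<or> r1w_unit (f ^ N) h1"
    and H2: "h2 mod (f ^ N) = 0 \<or> r1w_unit (f ^ N) h2"
  shows
   "let \<omega> = f ^ N;
        g = r4w_elem 0 (f ^ a) (f ^ t1 * h1) (f ^ t2 * h2);
        L = (LEAST L. r4w_in_ideal \<omega> g (r4w_elem 0 0 0 (f ^ L)));
        \<beta>1 = r1w_fval \<omega> f (f ^ (N - a + t2) * h2 - f ^ (N - 2 * (a - t1)) * h1 ^ 2);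
        \<beta>2 = r1w_fval \<omega> f (f ^ t1 * h1 - f ^ (a + t2 - t1) * h2 * r1w_inv \<omega> h1);
        z1 = (h1 mod \<omega> = 0); z2 = (h2 mod \<omega> = 0)
    in (z1 \<and> z2 \<longrightarrow> L = a)
     \<and> (z1 \<and> \<not> z2 \<longrightarrow> L = min a (N - a + t2))
     \<and> (\<not> z1 \<and> z2 \<and> a \<le> N - a + t1 \<longrightarrow> L = min a (N - 2 * (a - t1)))
     \<and> (\<not> z1 \<and> z2 \<and> a \<ge> N - a + t1 \<longrightarrow> L = t1)
     \<and> (\<not> z1 \<and> \<not> z2 \<and> a \<le> N - a + t1 \<longrightarrow>
          enat L = min (enat a) (min (enat (N - a + t1)) \<beta>1))
     \<and> (\<not> z1 \<and> \<not> z2 \<and> a \<ge> N - a + t1 \<longrightarrow>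
          enat L = min (enat a) (min (enat (N + t2 - t1)) \<beta>2))"
proof -
  have N0: "0 < N" using aN by simp
  define Lq where "Lq = (LEAST L. Qp f N a t1 t2 h1 h2 L)"
  have z: "\<And>h. (h mod f ^ N = 0) = (f ^ N dvd h)" by (simp add: mod_eq_0_iff_dvd)
  have sj: "\<And>j h. j < N \<Longrightarrow> f ^ N dvd h \<Longrightarrow> f ^ Suc j dvd h"
  proof -
    fix j and h :: "'a poly" assume "j < N" "f ^ N dvd h"
    moreover have "f ^ Suc j dvd f ^ N" using \<open>j < N\<close> by (intro le_imp_power_dvd) simp
    ultimately show "f ^ Suc j dvd h" using dvd_trans by blast
  qed
  have U1: "\<not> f dvd h1" "\<exists>v. f ^ N dvd h1 * v - 1" if "\<not> f ^ N dvd h1"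
    using unit_facts[OF pf N0] H1 that z by blast+
  have U2: "\<not> f dvd h2" if "\<not> f ^ N dvd h2"
    using unit_facts[OF pf N0] H2 that z by blast
  have sq: "\<not> f dvd h1 ^ 2" if "\<not> f dvd h1" using that prime_elem_dvd_power[OF pf] by blast
  have c1: "Lq = a" if h1: "f ^ N dvd h1" and h2: "f ^ N dvd h2"
  proof -
    have "enat Lq = enat a" unfolding Lq_def
    proof (rule least_enat[OF _ _ aN])
      fix j assume j: "j < N"
      have "f ^ Suc j dvd f ^ (N - a + t2) * h2" using sj[OF j h2] by simp
      then show "Qp f N a t1 t2 h1 h2 j \<longleftrightarrow> enat a \<le> enat j" using G0[OF pf h1 aN j] by simp
    qed simp
    then show ?thesis by simp
  qed
  have c2: "Lq = min a (N - a + t2)" if h1: "f ^ N dvd h1" and h2: "\<not> f ^ N dvd h2"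
  proof -
    have "enat Lq = enat (min a (N - a + t2))" unfolding Lq_def
    proof (rule least_enat[OF _ _ aN])
      fix j assume j: "j < N"
      have "f ^ Suc j dvd f ^ (N - a + t2) * h2 \<longleftrightarrow> Suc j \<le> N - a + t2"
        by (rule pw_unit_dvd[OF pf U2[OF h2]])
      then show "Qp f N a t1 t2 h1 h2 j \<longleftrightarrow> enat (min a (N - a + t2)) \<le> enat j"
        using G0[OF pf h1 aN j] by auto
    qed simp
    then show ?thesis by simp
  qed
  have c3: "Lq = min a (N - 2 * (a - t1))" if h1: "\<not> f ^ N dvd h1" and h2: "f ^ N dvd h2"
    and le: "a \<le> N - a + t1"
  proof -
    obtain v1 where v1: "f ^ N dvd h1 * v1 - 1" using U1[OF h1] by blast
    have le2: "2 * a \<le> N + t1" using le aN by simp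
    have "enat Lq = enat (min a (N - 2 * (a - t1)))" unfolding Lq_def
    proof (rule least_enat[OF _ _ aN])
      fix j assume j: "j < N"
      have "f ^ Suc j dvd f ^ (N - a + t2) * h2" using sj[OF j h2] by simp
      then have "f ^ Suc j dvd f ^ (N - a + t2) * h2 - f ^ (N - 2 * (a - t1)) * h1 ^ 2
          \<longleftrightarrow> f ^ Suc j dvd f ^ (N - 2 * (a - t1)) * h1 ^ 2" by (rule dvd_diff_iff1)
      also have "\<dots> \<longleftrightarrow> Suc j \<le> N - 2 * (a - t1)" by (rule pw_unit_dvd[OF pf sq[OF U1(1)[OF h1]]])
      finally show "Qp f N a t1 t2 h1 h2 j \<longleftrightarrow> enat (min a (N - 2 * (a - t1))) \<le> enat j"
        using G5[OF pf v1 le2 aN t1a j] le by auto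
    qed simp
    then show ?thesis by simp
  qed
  have c4: "Lq = t1" if h1: "\<not> f ^ N dvd h1" and h2: "f ^ N dvd h2"
    and le: "a \<ge> N - a + t1"
  proof -
    obtain v1 where v1: "f ^ N dvd h1 * v1 - 1" using U1[OF h1] by blast
    have le2: "N + t1 \<le> 2 * a" using le aN by simp
    have "enat Lq = enat t1" unfolding Lq_def
    proof (rule least_enat[OF _ _ aN])
      fix j assume j: "j < N"
      have "f ^ Suc j dvd f ^ (a - t1 + t2) * h2" using sj[OF j h2] by simp
      then have "f ^ Suc j dvd f ^ (a - t1 + t2) * h2 - f ^ t1 * h1 ^ 2
          \<longleftrightarrow> f ^ Suc j dvd f ^ t1 * h1 ^ 2" by (rule dvd_diff_iff1)
      also have "\<dots> \<longleftrightarrow> Suc j \<le> t1" by (rule pw_unit_dvd[OF pf sq[OF U1(1)[OF h1]]])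
      finally show "Qp f N a t1 t2 h1 h2 j \<longleftrightarrow> enat t1 \<le> enat j"
        using G6[OF pf U1(1)[OF h1] v1 le2 aN t1a j] le t1a by auto
    qed (use t1a in simp)
    then show ?thesis by simp
  qed
  have c5: "enat Lq = min (enat a) (min (enat (N - a + t1))
       (r1w_fval (f ^ N) f (f ^ (N - a + t2) * h2 - f ^ (N - 2 * (a - t1)) * h1 ^ 2)))"
    if h1: "\<not> f ^ N dvd h1" and h2: "\<not> f ^ N dvd h2" and le: "a \<le> N - a + t1"
    unfolding Lq_def
  proof (rule least_enat[OF _ _ aN])
    obtain v1 where v1: "f ^ N dvd h1 * v1 - 1" using U1[OF h1] by blast
    have le2: "2 * a \<le> N + t1" using le aN by simp
    fix j assume j: "j < N"
    define X where "X = f ^ (N - a + t2) * h2 - f ^ (N - 2 * (a - t1)) * h1 ^ 2"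
    have fv: "enat (Suc j) \<le> r1w_fval (f ^ N) f X \<longleftrightarrow> f ^ Suc j dvd X"
      using fval_iff[of j N f X] j by simp
    have GX: "Qp f N a t1 t2 h1 h2 j \<longleftrightarrow> a \<le> j \<or> N - a + t1 \<le> j \<or> \<not> f ^ Suc j dvd X"
      using G5[OF pf v1 le2 aN t1a j] unfolding X_def .
    have "r1w_fval (f ^ N) f X \<le> enat j \<longleftrightarrow> \<not> enat (Suc j) \<le> r1w_fval (f ^ N) f X"
      by (auto simp: Suc_ile_eq not_less)
    then show "Qp f N a t1 t2 h1 h2 j \<longleftrightarrow> min (enat a) (min (enat (N - a + t1))
       (r1w_fval (f ^ N) f (f ^ (N - a + t2) * h2 - f ^ (N - 2 * (a - t1)) * h1 ^ 2))) \<le> enat j"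
      using GX fv unfolding X_def[symmetric] by (auto simp: min_le_iff_disj)
  qed simp
  have c6: "enat Lq = min (enat a) (min (enat (N + t2 - t1))
       (r1w_fval (f ^ N) f (f ^ t1 * h1 - f ^ (a + t2 - t1) * h2 * r1w_inv (f ^ N) h1)))"
    if h1: "\<not> f ^ N dvd h1" and h2: "\<not> f ^ N dvd h2" and le: "a \<ge> N - a + t1"
    unfolding Lq_def
  proof (rule least_enat[OF _ _ aN])
    obtain v1 where v1: "f ^ N dvd h1 * v1 - 1" using U1[OF h1] by blast
    have nh1: "\<not> f dvd h1" using U1[OF h1] by blast
    have le2: "N + t1 \<le> 2 * a" using le aN by simp
    define w where "w = r1w_inv (f ^ N) h1"
    have "\<exists>v. (h1 * v) mod f ^ N = 1 mod f ^ N" using H1 h1 z unfolding r1w_unit_def by blast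
    then have "(h1 * w) mod f ^ N = 1 mod f ^ N" unfolding w_def r1w_inv_def by (rule someI_ex)
    then have w: "f ^ N dvd h1 * w - 1" by (simp add: mod_eq_dvd_iff)
    define A where "A = a - t1 + t2"
    have A': "a + t2 - t1 = A" unfolding A_def using t1a by simp
    define Y where "Y = f ^ A * h2 - f ^ t1 * h1 ^ 2"
    define Z where "Z = f ^ t1 * h1 - f ^ A * h2 * w"
    fix j assume j: "j < N"
    have YZ: "f ^ Suc j dvd Y \<longleftrightarrow> f ^ Suc j dvd Z"
    proof -
      have e: "h1 * Z = - (f ^ A * h2 * (h1 * w - 1)) - Y"
        unfolding Z_def Y_def by (simp add: algebra_simps power2_eq_square)
      have "f ^ Suc j dvd h1 * w - 1" using sj[OF j w] .
      then have W: "f ^ Suc j dvd - (f ^ A * h2 * (h1 * w - 1))" by simp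
      have "f ^ Suc j dvd h1 * Z \<longleftrightarrow> f ^ Suc j dvd Y" unfolding e by (rule dvd_diff_iff1[OF W])
      moreover have "f ^ Suc j dvd h1 * Z \<longleftrightarrow> f ^ Suc j dvd Z" by (rule pw_dvd_cop[OF pf nh1])
      ultimately show ?thesis by blast
    qed
    have key: "Suc j \<le> A \<and> Suc j \<le> t1" if "f ^ Suc j dvd Y" "A \<noteq> t1"
      using val_two[OF pf sq[OF nh1] U2[OF h2] that(2)] that(1) unfolding Y_def by blast
    have fv: "enat (Suc j) \<le> r1w_fval (f ^ N) f Z \<longleftrightarrow> f ^ Suc j dvd Z"
      using fval_iff[of j N f Z] j by simp
    have "r1w_fval (f ^ N) f Z \<le> enat j \<longleftrightarrow> \<not> enat (Suc j) \<le> r1w_fval (f ^ N) f Z"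
      by (auto simp: Suc_ile_eq not_less)
    with fv have fz: "r1w_fval (f ^ N) f Z \<le> enat j \<longleftrightarrow> \<not> f ^ Suc j dvd Y" using YZ by simp
    have G: "Qp f N a t1 t2 h1 h2 j \<longleftrightarrow> a \<le> j \<or> N - a + t1 \<le> j \<or> \<not> f ^ Suc j dvd Y"
      using G6[OF pf nh1 v1 le2 aN t1a j] unfolding Y_def A_def .
    have arith: "(a \<le> j \<or> N - a + t1 \<le> j \<or> \<not> f ^ Suc j dvd Y) \<longleftrightarrow>
                 (a \<le> j \<or> N + t2 - t1 \<le> j \<or> \<not> f ^ Suc j dvd Y)"
    proof (cases "f ^ Suc j dvd Y")
      case True
      show ?thesis
      proof (cases "A = t1")
        case True
        then have "N - a + t1 = N + t2 - t1" unfolding A_def using t1a aN t21 by simp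
        then show ?thesis by simp
      next
        case False
        with key \<open>f ^ Suc j dvd Y\<close> have "Suc j \<le> A" "Suc j \<le> t1" by blast+
        then show ?thesis unfolding A_def using t1a aN t21 by auto
      qed
    qed simp
    show "Qp f N a t1 t2 h1 h2 j \<longleftrightarrow> min (enat a) (min (enat (N + t2 - t1))
       (r1w_fval (f ^ N) f (f ^ t1 * h1 - f ^ (a + t2 - t1) * h2 * r1w_inv (f ^ N) h1))) \<le> enat j"
      unfolding A' w_def[symmetric] Z_def[symmetric] using G arith fz by (auto simp: min_le_iff_disj)
  qed simp
  show ?thesis
    unfolding Let_def reduceA Lq_def[symmetric] z
    using c1 c2 c3 c4 c5 c6 by blast
qed

theorem proposition4p2:
  fixes p m s a t1 t2 :: nat
    and f h1 h2 :: "'a::{field,finite} poly"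
  assumes "prime p" and "m \<ge> 1" and "card (UNIV :: 'a set) = p ^ m"
    and "irreducible f"
    and "t2 < t1" and "t1 < a" and "a \<le> p ^ s - 1"
    and "h1 mod (f ^ (p ^ s)) = 0 \<or> r1w_unit (f ^ (p ^ s)) h1"
    and "h2 mod (f ^ (p ^ s)) = 0 \<or> r1w_unit (f ^ (p ^ s)) h2"
  shows
   "let \<omega> = f ^ (p ^ s);
        g = r4w_elem 0 (f ^ a) (f ^ t1 * h1) (f ^ t2 * h2);
        L = (LEAST L. r4w_in_ideal \<omega> g (r4w_elem 0 0 0 (f ^ L)));
        \<beta>1 = r1w_fval \<omega> f (f ^ (p ^ s - a + t2) * h2 - f ^ (p ^ s - 2 * (a - t1)) * h1 ^ 2);
        \<beta>2 = r1w_fval \<omega> f (f ^ t1 * h1 - f ^ (a + t2 - t1) * h2 * r1w_inv \<omega> h1);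
        z1 = (h1 mod \<omega> = 0); z2 = (h2 mod \<omega> = 0)
    in (z1 \<and> z2 \<longrightarrow> L = a)
     \<and> (z1 \<and> \<not> z2 \<longrightarrow> L = min a (p ^ s - a + t2))
     \<and> (\<not> z1 \<and> z2 \<and> a \<le> p ^ s - a + t1 \<longrightarrow> L = min a (p ^ s - 2 * (a - t1)))
     \<and> (\<not> z1 \<and> z2 \<and> a \<ge> p ^ s - a + t1 \<longrightarrow> L = t1)
     \<and> (\<not> z1 \<and> \<not> z2 \<and> a \<le> p ^ s - a + t1 \<longrightarrow>
          enat L = min (enat a) (min (enat (p ^ s - a + t1)) \<beta>1))
     \<and> (\<not> z1 \<and> \<not> z2 \<and> a \<ge> p ^ s - a + t1 \<longrightarrow>
          enat L = min (enat a) (min (enat (p ^ s + t2 - t1)) \<beta>2))"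
proof -
  have pf: "prime_elem f" using assms(4) by (rule field_poly_irreducible_imp_prime)
  have aN: "a < p ^ s" using assms(6,7) by linarith
  show ?thesis by (rule main[OF pf assms(5) assms(6) aN assms(8) assms(9)])
qed

end
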